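(* Let $d\geq 1$, let $p\in[0,1]$ with $p<p_d=\frac{2d+1}{4d}$, let $(S_n)$ be the $d$-dimensional elephant random walk with memory parameter $p$, and let $G_n=\frac{1}{n}\sum_{k=1}^n S_k$ be its center of mass. Then $$\lim_{n\to\infty}\frac{1}{n}G_n=0 \quad\text{almost surely.}$$
   Context: The $d$-dimensional elephant random walk (ERW) with memory parameter $p\in[0,1]$ is defined as follows. Let $e_1,\dots,e_d$ be the standard basis of $\mathbb{R}^d$; the $2d$ directions are $\pm e_1,\dots,\pm e_d$. Set $S_0=0$. The first step $X_1$ is uniformly distributed on the $2d$ directions. For $n\geq 1$, given $X_1,\dots,X_n$, an index $k$ is chosen uniformly at random in $\{1,\dots,n\}$, and then $X_{n+1}=X_k$ with probability $p$, while $X_{n+1}$ equals each of the $2d-1$ remaining directions with probability $(1-p)/(2d-1)$. The position is $S_{n+1}=S_n+X_{n+1}$. The regime $p<p_d$ is called the diffusive regime. *)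

theory Defs
  imports "HOL-Probability.Probability"
begin

definition erw_dirs :: "(real ^ 'd) set" where
  "erw_dirs = {v. \<exists>i. \<exists>s::real. (s = 1 \<or> s = -1) \<and> v = (\<chi> j. if j = i then s else 0)}"

text \<open>Law of the d-dimensional elephant random walk with memory parameter p:
  the steps X 1, X 2, ... (index 0 unused) are discrete random variables on M;
  X 1 is uniform on the 2d directions, and conditionally on X 1 = h 1, ..., X n = h n,
  X (n+1) = v with probability (1/n) * sum_{k=1..n} (p if h k = v else (1-p)/(2d-1))
  (choose k uniformly, repeat X k with probability p, otherwise pick one of the
  2d-1 other directions uniformly).\<close>
definition is_erw :: "'a measure \<Rightarrow> real \<Rightarrow> (nat \<Rightarrow> 'a \<Rightarrow> real ^ 'd) \<Rightarrow> bool" where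
  "is_erw M p X \<longleftrightarrow>
     prob_space M \<and>
     (\<forall>k. X k \<in> measurable M (count_space UNIV)) \<and>
     (\<forall>v\<in>erw_dirs. measure M {\<omega>\<in>space M. X 1 \<omega> = v} = 1 / (2 * real CARD('d))) \<and>
     (\<forall>n\<ge>1. \<forall>h::nat \<Rightarrow> real ^ 'd. \<forall>v\<in>erw_dirs.
        measure M {\<omega>\<in>space M. (\<forall>k\<in>{1..n}. X k \<omega> = h k) \<and> X (Suc n) \<omega> = v}
        = measure M {\<omega>\<in>space M. \<forall>k\<in>{1..n}. X k \<omega> = h k}
          * ((\<Sum>k=1..n. if h k = v then p else (1 - p) / (2 * real CARD('d) - 1)) / real n))"

definition erw_pos :: "(nat \<Rightarrow> 'a \<Rightarrow> real ^ 'd) \<Rightarrow> nat \<Rightarrow> 'a \<Rightarrow> real ^ 'd" where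
  "erw_pos X n \<omega> = (\<Sum>k=1..n. X k \<omega>)"

definition erw_center :: "(nat \<Rightarrow> 'a \<Rightarrow> real ^ 'd) \<Rightarrow> nat \<Rightarrow> 'a \<Rightarrow> real ^ 'd" where
  "erw_center X n \<omega> = (1 / real n) *\<^sub>R (\<Sum>k=1..n. erw_pos X k \<omega>)"

end

theory Submission
  imports Defs "HOL-Library.Discrete_Functions"
begin


lemma dirs_eq: "erw_dirs = (\<lambda>(i,s). axis i s) ` (UNIV \<times> {1::real,-1})"
  unfolding erw_dirs_def axis_def by auto

lemma dirs_finite: "finite (erw_dirs :: (real^'d) set)"
  unfolding dirs_eq by simp

lemma dirs_card: "card (erw_dirs :: (real^'d) set) = 2 * CARD('d)"
proof -
  have "inj_on (\<lambda>(i,s). axis i s :: real^'d) (UNIV \<times> {1::real,-1})"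
    by (auto simp: inj_on_def axis_eq_axis)
  then have "card (erw_dirs :: (real^'d) set) = card (UNIV \<times> {1::real,-1} :: ('d \<times> real) set)"
    unfolding dirs_eq by (rule card_image)
  also have "\<dots> = 2 * CARD('d)" by (simp add: card_cartesian_product)
  finally show ?thesis .
qed

lemma dirs_norm: "v \<in> erw_dirs \<Longrightarrow> norm v = 1"
  unfolding dirs_eq by (auto simp: norm_eq_sqrt_inner inner_axis_axis)

lemma dirs_inner: "(v::real^'d) \<in> erw_dirs \<Longrightarrow> inner v v = 1"
  unfolding dirs_eq by (auto simp: inner_axis_axis)

lemma dirs_uminus: "v \<in> erw_dirs \<Longrightarrow> - v \<in> erw_dirs"
  unfolding dirs_eq by (auto simp: image_iff axis_def vec_eq_iff)

lemma dirs_sum: "(\<Sum>v\<in>(erw_dirs :: (real^'d) set). v) = 0"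
proof -
  have b: "bij_betw uminus (erw_dirs :: (real^'d) set) erw_dirs"
    by (rule bij_betwI[where g=uminus]) (auto simp: dirs_uminus)
  have "(\<Sum>v\<in>(erw_dirs :: (real^'d) set). v) = (\<Sum>v\<in>erw_dirs. - v)"
    using sum.reindex_bij_betw[OF b, of "\<lambda>v. v"] by simp
  also have "\<dots> = - (\<Sum>v\<in>(erw_dirs :: (real^'d) set). v)" by (simp add: sum_negf)
  finally show ?thesis by (simp add: vec_eq_iff)
qed



lemma sum_PiE_insert:
  assumes "a \<notin> S" "finite S" "\<And>x. finite (T x)"
  shows "(\<Sum>f\<in>Pi\<^sub>E (insert a S) T. F f) = (\<Sum>g\<in>Pi\<^sub>E S T. \<Sum>y\<in>T a. F (g(a:=y)))"
proof -
  have inj: "inj_on (\<lambda>(y, g). g(a := y)) (T a \<times> Pi\<^sub>E S T)"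
  proof (rule inj_onI, clarsimp)
    fix y g y' g' assume g: "g \<in> Pi\<^sub>E S T" and g': "g' \<in> Pi\<^sub>E S T" and eq: "g(a := y) = g'(a := y')"
    have "y = y'" using fun_cong[OF eq, of a] by simp
    moreover have "g = g'"
    proof
      fix x show "g x = g' x"
        using fun_cong[OF eq, of x] g g' assms(1) by (cases "x = a") (auto simp: PiE_def extensional_def)
    qed
    ultimately show "y = y' \<and> g = g'" by simp
  qed
  have "(\<Sum>f\<in>Pi\<^sub>E (insert a S) T. F f) = (\<Sum>(y,g)\<in>T a \<times> Pi\<^sub>E S T. F (g(a:=y)))"
    unfolding PiE_insert_eq by (subst sum.reindex[OF inj]) (simp add: case_prod_beta)
  also have "\<dots> = (\<Sum>y\<in>T a. \<Sum>g\<in>Pi\<^sub>E S T. F (g(a:=y)))"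
    by (rule sum.cartesian_product[symmetric])
  also have "\<dots> = (\<Sum>g\<in>Pi\<^sub>E S T. \<Sum>y\<in>T a. F (g(a:=y)))"
    by (rule sum.swap)
  finally show ?thesis .
qed

definition rr :: "real \<Rightarrow> nat \<Rightarrow> real" where
  "rr p N = (1 - p) / (2 * real N - 1)"

locale erw_loc = prob_space M for M :: "'a measure" +
  fixes p :: real and X :: "nat \<Rightarrow> 'a \<Rightarrow> real ^ 'd"
  assumes isE: "is_erw M p X" and p0: "0 \<le> p" and p1: "p \<le> 1"
begin

abbreviation "D \<equiv> (erw_dirs :: (real^'d) set)"

definition cyl :: "nat \<Rightarrow> (nat \<Rightarrow> real^'d) \<Rightarrow> 'a set" where
  "cyl n h = {\<omega>\<in>space M. \<forall>k\<in>{1..n}. X k \<omega> = h k}"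

definition Pn :: "nat \<Rightarrow> (nat \<Rightarrow> real^'d) \<Rightarrow> real" where
  "Pn n h = prob (cyl n h)"

definition q :: "nat \<Rightarrow> (nat \<Rightarrow> real^'d) \<Rightarrow> real^'d \<Rightarrow> real" where
  "q n h v = (\<Sum>k=1..n. if h k = v then p else rr p CARD('d)) / real n"

lemma Xmeas[measurable]: "X k \<in> measurable M (count_space UNIV)"
  using isE unfolding is_erw_def by auto

lemma cyl_sets[measurable]: "cyl n h \<in> sets M"
  unfolding cyl_def by measurable

lemma restr_eq:
  assumes A: "A \<subseteq> Pi\<^sub>E {1..n} (\<lambda>_. D)"
  shows "{\<omega>\<in>space M. restrict (\<lambda>k. X k \<omega>) {1..n} \<in> A} = (\<Union>h\<in>A. cyl n h)"
  proof safe
    fix \<omega> assume "\<omega> \<in> space M" "restrict (\<lambda>k. X k \<omega>) {1..n} \<in> A"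
    then show "\<omega> \<in> (\<Union>h\<in>A. cyl n h)"
      by (auto simp: cyl_def intro!: bexI[where x="restrict (\<lambda>k. X k \<omega>) {1..n}"])
  next
    fix \<omega> h assume h: "h \<in> A" and w: "\<omega> \<in> cyl n h"
    have "restrict (\<lambda>k. X k \<omega>) {1..n} = h"
    proof
      fix k show "restrict (\<lambda>k. X k \<omega>) {1..n} k = h k"
        using h A w by (cases "k \<in> {1..n}") (auto simp: cyl_def PiE_def extensional_def)
    qed
    then show "restrict (\<lambda>k. X k \<omega>) {1..n} \<in> A" using h by simp
  next
    fix \<omega> h assume "\<omega> \<in> cyl n h" then show "\<omega> \<in> space M" by (simp add: cyl_def)
  qed

lemma restr_sets:
  assumes A: "A \<subseteq> Pi\<^sub>E {1..n} (\<lambda>_. D)"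
  shows "{\<omega>\<in>space M. restrict (\<lambda>k. X k \<omega>) {1..n} \<in> A} \<in> sets M"
proof -
  have fin: "finite A"
    by (rule finite_subset[OF A]) (simp add: finite_PiE dirs_finite)
  show ?thesis unfolding restr_eq[OF A] using fin by (intro sets.finite_UN) auto
qed

lemma restr_sum:
  assumes A: "A \<subseteq> Pi\<^sub>E {1..n} (\<lambda>_. D)"
  shows "prob {\<omega>\<in>space M. restrict (\<lambda>k. X k \<omega>) {1..n} \<in> A} = (\<Sum>h\<in>A. Pn n h)"
proof -
  have fin: "finite A"
    by (rule finite_subset[OF A]) (simp add: finite_PiE dirs_finite)
  have eq: "{\<omega>\<in>space M. restrict (\<lambda>k. X k \<omega>) {1..n} \<in> A} = (\<Union>h\<in>A. cyl n h)"
  proof safe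
    fix \<omega> assume "\<omega> \<in> space M" "restrict (\<lambda>k. X k \<omega>) {1..n} \<in> A"
    then show "\<omega> \<in> (\<Union>h\<in>A. cyl n h)"
      by (auto simp: cyl_def intro!: bexI[where x="restrict (\<lambda>k. X k \<omega>) {1..n}"])
  next
    fix \<omega> h assume h: "h \<in> A" and w: "\<omega> \<in> cyl n h"
    have "restrict (\<lambda>k. X k \<omega>) {1..n} = h"
    proof
      fix k show "restrict (\<lambda>k. X k \<omega>) {1..n} k = h k"
        using h A w by (cases "k \<in> {1..n}") (auto simp: cyl_def PiE_def extensional_def)
    qed
    then show "restrict (\<lambda>k. X k \<omega>) {1..n} \<in> A" using h by simp
  next
    fix \<omega> h assume "\<omega> \<in> cyl n h" then show "\<omega> \<in> space M" by (simp add: cyl_def)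
  qed
  have disj: "disjoint_family_on (cyl n) A"
  unfolding disjoint_family_on_def proof (intro ballI impI)
    fix h h' assume h: "h \<in> A" and h': "h' \<in> A" and ne: "h \<noteq> h'"
    then obtain k where "h k \<noteq> h' k" by auto
    moreover have "k \<in> {1..n}"
      using h h' A \<open>h k \<noteq> h' k\<close> by (metis PiE_arb subsetD)
    ultimately show "cyl n h \<inter> cyl n h' = {}" by (auto simp: cyl_def)
  qed
  show ?thesis unfolding eq Pn_def
    by (rule measure_finite_Union[OF fin _ disj]) auto
qed

end


context erw_loc begin

lemma Dfin: "finite D" by (rule dirs_finite)
lemma Dcard: "card D = 2 * CARD('d)" by (rule dirs_card)

lemma Ngt: "2 * real CARD('d) - 1 \<ge> 1" by simp

lemma step:
  assumes n: "n \<ge> 1" and v: "v \<in> D"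
  shows "Pn (Suc n) (h(Suc n := v)) = Pn n h * q n h v"
proof -
  let ?h = "h(Suc n := v)"
  have ax: "measure M {\<omega>\<in>space M. (\<forall>k\<in>{1..n}. X k \<omega> = ?h k) \<and> X (Suc n) \<omega> = v}
        = measure M {\<omega>\<in>space M. \<forall>k\<in>{1..n}. X k \<omega> = ?h k}
          * ((\<Sum>k=1..n. if ?h k = v then p else (1 - p) / (2 * real CARD('d) - 1)) / real n)"
    using isE n v unfolding is_erw_def by blast
  have e1: "{\<omega>\<in>space M. (\<forall>k\<in>{1..n}. X k \<omega> = ?h k) \<and> X (Suc n) \<omega> = v} = cyl (Suc n) ?h"
    unfolding cyl_def using n by (auto simp: le_Suc_eq)
  have e2: "{\<omega>\<in>space M. \<forall>k\<in>{1..n}. X k \<omega> = ?h k} = cyl n h"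
    unfolding cyl_def by auto
  have e3: "(\<Sum>k=1..n. if ?h k = v then p else (1 - p) / (2 * real CARD('d) - 1)) = (\<Sum>k=1..n. if h k = v then p else rr p CARD('d))"
    by (rule sum.cong) (auto simp: rr_def)
  show ?thesis using ax unfolding e1 e2 e3 Pn_def q_def by simp
qed

lemma sum_if_dir:
  assumes "w \<in> D"
  shows "(\<Sum>v\<in>D. if w = v then p else rr p CARD('d)) = 1"
proof -
  have "(\<Sum>v\<in>D. if w = v then p else rr p CARD('d)) = p + (\<Sum>v\<in>D - {w}. if w = v then p else rr p CARD('d))"
    by (subst sum.remove[OF Dfin assms]) simp
  also have "(\<Sum>v\<in>D - {w}. if w = v then p else rr p CARD('d)) = (\<Sum>v\<in>D - {w}. rr p CARD('d))"
    by (rule sum.cong) auto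
  also have "\<dots> = (2 * real CARD('d) - 1) * rr p CARD('d)"
    using assms Dfin Dcard by (simp add: card_Diff_singleton of_nat_diff)
  also have "\<dots> = 1 - p"
  proof -
    have "2 * real CARD('d) - 1 \<noteq> 0" using Ngt by linarith
    then show ?thesis by (simp add: rr_def)
  qed
  finally show ?thesis by simp
qed

lemma sum_if_dir_vec:
  assumes "w \<in> D"
  shows "(\<Sum>v\<in>D. (if w = v then p else rr p CARD('d)) *\<^sub>R v) = (p - rr p CARD('d)) *\<^sub>R w"
proof -
  have "(\<Sum>v\<in>D. (if w = v then p else rr p CARD('d)) *\<^sub>R v)
      = (\<Sum>v\<in>D. rr p CARD('d) *\<^sub>R v + (if w = v then (p - rr p CARD('d)) *\<^sub>R v else 0))"
    by (rule sum.cong) (auto simp: algebra_simps)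
  also have "\<dots> = rr p CARD('d) *\<^sub>R (\<Sum>v\<in>D. v) + (p - rr p CARD('d)) *\<^sub>R w"
    using assms Dfin by (simp add: sum.distrib scaleR_sum_right sum.delta sum.delta')
  finally show ?thesis by (simp add: dirs_sum)
qed

lemma sumq:
  assumes n: "n \<ge> 1" and h: "\<forall>k\<in>{1..n}. h k \<in> D"
  shows "(\<Sum>v\<in>D. q n h v) = 1"
proof -
  have "(\<Sum>v\<in>D. q n h v) = (\<Sum>k=1..n. \<Sum>v\<in>D. if h k = v then p else rr p CARD('d)) / real n"
    unfolding q_def by (simp add: sum_divide_distrib[symmetric] sum.swap[of _ D])
  also have "\<dots> = (\<Sum>k=1..n. 1) / real n"
    by (rule arg_cong[where f="\<lambda>x. x / real n"], rule sum.cong) (use h sum_if_dir in auto)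
  finally show ?thesis using n by simp
qed

lemma sumqv:
  assumes n: "n \<ge> 1" and h: "\<forall>k\<in>{1..n}. h k \<in> D"
  shows "(\<Sum>v\<in>D. q n h v *\<^sub>R v) = ((p - rr p CARD('d)) / real n) *\<^sub>R (\<Sum>k=1..n. h k)"
proof -
  have "(\<Sum>v\<in>D. q n h v *\<^sub>R v) = (1 / real n) *\<^sub>R (\<Sum>k=1..n. \<Sum>v\<in>D. (if h k = v then p else rr p CARD('d)) *\<^sub>R v)"
  proof -
    have "q n h v *\<^sub>R v = (1 / real n) *\<^sub>R (\<Sum>k=1..n. (if h k = v then p else rr p CARD('d)) *\<^sub>R v)" for v
      unfolding q_def by (simp add: scaleR_sum_left[symmetric])
    then show ?thesis by (simp add: scaleR_sum_right[symmetric] sum.swap[of _ D])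
  qed
  also have "\<dots> = (1 / real n) *\<^sub>R (\<Sum>k=1..n. (p - rr p CARD('d)) *\<^sub>R h k)"
    by (rule arg_cong[where f="\<lambda>x. (1 / real n) *\<^sub>R x"], rule sum.cong) (use h sum_if_dir_vec in auto)
  finally show ?thesis by (simp add: scaleR_sum_right[symmetric])
qed

lemma E_step:
  assumes n: "n \<ge> 1"
  shows "(\<Sum>h\<in>Pi\<^sub>E {1..Suc n} (\<lambda>_. D). F h * Pn (Suc n) h)
       = (\<Sum>g\<in>Pi\<^sub>E {1..n} (\<lambda>_. D). Pn n g * (\<Sum>v\<in>D. F (g(Suc n:=v)) * q n g v))"
proof -
  have "{1..Suc n} = insert (Suc n) {1..n}" by auto
  then have "(\<Sum>h\<in>Pi\<^sub>E {1..Suc n} (\<lambda>_. D). F h * Pn (Suc n) h)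
      = (\<Sum>g\<in>Pi\<^sub>E {1..n} (\<lambda>_. D). \<Sum>v\<in>D. F (g(Suc n:=v)) * Pn (Suc n) (g(Suc n:=v)))"
    by (simp add: sum_PiE_insert Dfin)
  also have "\<dots> = (\<Sum>g\<in>Pi\<^sub>E {1..n} (\<lambda>_. D). Pn n g * (\<Sum>v\<in>D. F (g(Suc n:=v)) * q n g v))"
    by (rule sum.cong[OF refl]) (simp add: step[OF n] sum_distrib_left mult_ac)
  finally show ?thesis .
qed

lemma Pn_nonneg: "Pn n h \<ge> 0" by (simp add: Pn_def)

lemma Psum1: "n \<ge> 1 \<Longrightarrow> (\<Sum>h\<in>Pi\<^sub>E {1..n} (\<lambda>_. D). Pn n h) = 1"
proof (induction n rule: nat_induct_at_least)
  case base
  have "(\<Sum>h\<in>Pi\<^sub>E {1..1} (\<lambda>_. D). Pn 1 h) = (\<Sum>h\<in>Pi\<^sub>E (insert 1 {}) (\<lambda>_. D). Pn 1 h)" by simp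
  also have "\<dots> = (\<Sum>g\<in>Pi\<^sub>E {} (\<lambda>_. D). \<Sum>y\<in>D. Pn 1 (g(1 := y)))"
    by (rule sum_PiE_insert) (auto simp: Dfin)
  also have "\<dots> = (\<Sum>g\<in>Pi\<^sub>E ({}::nat set) (\<lambda>_. D). \<Sum>y\<in>D. 1 / (2 * real CARD('d)))"
  proof -
    have *: "Pn 1 (g(1 := y)) = 1 / (2 * real CARD('d))" if y: "y \<in> D" for g y
    proof -
      have "cyl 1 (g(1 := y)) = {\<omega>\<in>space M. X 1 \<omega> = y}"
        unfolding cyl_def by auto
      then show ?thesis
        using isE y unfolding is_erw_def Pn_def by auto
    qed
    show ?thesis by (intro sum.cong refl) (rule *, assumption)
  qed
  also have "\<dots> = 1" by (simp add: Dcard PiE_empty_domain)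
  finally show ?case by simp
next
  case (Suc n)
  have "(\<Sum>h\<in>Pi\<^sub>E {1..Suc n} (\<lambda>_. D). Pn (Suc n) h) = (\<Sum>h\<in>Pi\<^sub>E {1..Suc n} (\<lambda>_. D). 1 * Pn (Suc n) h)" by simp
  also have "\<dots> = (\<Sum>g\<in>Pi\<^sub>E {1..n} (\<lambda>_. D). Pn n g * (\<Sum>v\<in>D. 1 * q n g v))"
    by (rule E_step[OF Suc(1)])
  also have "\<dots> = (\<Sum>g\<in>Pi\<^sub>E {1..n} (\<lambda>_. D). Pn n g)"
    by (rule sum.cong[OF refl]) (use Suc(1) sumq in \<open>auto simp: PiE_mem\<close>)
  finally show ?case using Suc by simp
qed

definition V :: "nat \<Rightarrow> real" where
  "V n = (\<Sum>h\<in>Pi\<^sub>E {1..n} (\<lambda>_. D). (norm (\<Sum>k=1..n. h k))\<^sup>2 * Pn n h)"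

lemma V_nonneg: "V n \<ge> 0" unfolding V_def by (intro sum_nonneg mult_nonneg_nonneg) (auto simp: Pn_nonneg)

lemma V1: "V 1 = 1"
proof -
  have "V 1 = (\<Sum>h\<in>Pi\<^sub>E {1..1} (\<lambda>_. D). Pn 1 h)"
    unfolding V_def by (rule sum.cong) (auto simp: dirs_norm PiE_iff)
  then show ?thesis using Psum1[of 1] by simp
qed

lemma V_rec:
  assumes n: "n \<ge> 1"
  shows "V (Suc n) = (1 + 2 * (p - rr p CARD('d)) / real n) * V n + 1"
proof -
  let ?a = "p - rr p CARD('d)"
  have "V (Suc n) = (\<Sum>g\<in>Pi\<^sub>E {1..n} (\<lambda>_. D). Pn n g * (\<Sum>v\<in>D. (norm (\<Sum>k=1..Suc n. (g(Suc n:=v)) k))\<^sup>2 * q n g v))"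
    unfolding V_def by (rule E_step[OF n])
  also have "\<dots> = (\<Sum>g\<in>Pi\<^sub>E {1..n} (\<lambda>_. D). (1 + 2 * ?a / real n) * ((norm (\<Sum>k=1..n. g k))\<^sup>2 * Pn n g) + Pn n g)"
  proof (rule sum.cong[OF refl])
    fix g assume g: "g \<in> Pi\<^sub>E {1..n} (\<lambda>_. D)"
    then have gD: "\<forall>k\<in>{1..n}. g k \<in> D" by (auto simp: PiE_mem)
    define s where "s = (\<Sum>k=1..n. g k)"
    have sv: "(\<Sum>k=1..Suc n. (g(Suc n:=v)) k) = s + v" for v
    proof -
      have "(\<Sum>k=1..Suc n. (g(Suc n:=v)) k) = (\<Sum>k=1..n. (g(Suc n:=v)) k) + v"
        by (simp add: sum.cl_ivl_Suc)
      also have "(\<Sum>k=1..n. (g(Suc n:=v)) k) = s" unfolding s_def by (rule sum.cong) auto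
      finally show ?thesis .
    qed
    have "(\<Sum>v\<in>D. (norm (\<Sum>k=1..Suc n. (g(Suc n:=v)) k))\<^sup>2 * q n g v)
        = (\<Sum>v\<in>D. (norm s)\<^sup>2 * q n g v + 2 * (q n g v * inner s v) + q n g v)"
      unfolding sv
      by (rule sum.cong[OF refl]) (auto simp: power2_norm_eq_inner inner_add inner_commute dirs_inner algebra_simps)
    also have "\<dots> = (norm s)\<^sup>2 * (\<Sum>v\<in>D. q n g v) + 2 * inner s (\<Sum>v\<in>D. q n g v *\<^sub>R v) + (\<Sum>v\<in>D. q n g v)"
      by (simp add: sum.distrib sum_distrib_left inner_sum_right)
    also have "\<dots> = (1 + 2 * ?a / real n) * (norm s)\<^sup>2 + 1"
    proof -
      have "(\<Sum>v\<in>D. q n g v *\<^sub>R v) = (?a / real n) *\<^sub>R s"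
        using sumqv[OF n gD] unfolding s_def .
      then show ?thesis using sumq[OF n gD]
        by (simp add: power2_norm_eq_inner algebra_simps)
    qed
    finally show "Pn n g * (\<Sum>v\<in>D. (norm (\<Sum>k=1..Suc n. (g(Suc n:=v)) k))\<^sup>2 * q n g v)
        = (1 + 2 * ?a / real n) * ((norm (\<Sum>k=1..n. g k))\<^sup>2 * Pn n g) + Pn n g"
      by (simp add: s_def algebra_simps)
  qed
  also have "\<dots> = (1 + 2 * ?a / real n) * V n + 1"
    unfolding V_def using Psum1[OF n] by (simp add: sum.distrib sum_distrib_left)
  finally show ?thesis .
qed

end


context erw_loc begin

lemma a_bound:
  assumes "p < (2 * real CARD('d) + 1) / (4 * real CARD('d))"
  shows "p - rr p CARD('d) < 1/2"
proof -
  define c where "c = 2 * real CARD('d) - 1"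
  have c: "c \<ge> 1" unfolding c_def by (rule Ngt)
  have N: "4 * real CARD('d) > 0" by simp
  have h1: "p * (4 * real CARD('d)) < 2 * real CARD('d) + 1"
    using assms pos_less_divide_eq[OF N] by blast
  have h2: "p * c - (1 - p) < c / 2" using h1 unfolding c_def by (simp add: algebra_simps)
  have "(p * c - (1 - p)) / c < (c / 2) / c"
    using h2 c by (intro divide_strict_right_mono) auto
  moreover have "(p * c - (1 - p)) / c = p - rr p CARD('d)"
    using c by (simp add: rr_def c_def[symmetric] diff_divide_distrib)
  moreover have "(c / 2) / c = 1/2" using c by simp
  ultimately show ?thesis by simp
qed

lemma V_bound:
  assumes "p - rr p CARD('d) < 1/2"
  defines "K \<equiv> max 1 (1 / (1 - 2 * (p - rr p CARD('d))))"
  shows "n \<ge> 1 \<Longrightarrow> V n \<le> K * real n"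
proof (induction n rule: nat_induct_at_least)
  case base then show ?case using V1 by (simp add: K_def)
next
  case (Suc n)
  let ?a = "p - rr p CARD('d)"
  have pos: "1 - 2 * ?a > 0" using assms by simp
  have K1: "K \<ge> 1" unfolding K_def by (rule max.cobounded1)
  have "K \<ge> 1 / (1 - 2 * ?a)" unfolding K_def by (rule max.cobounded2)
  then have "K * (1 - 2 * ?a) \<ge> 1 / (1 - 2 * ?a) * (1 - 2 * ?a)"
    using pos by (intro mult_right_mono) auto
  then have K2: "K * (1 - 2 * ?a) \<ge> 1" using pos by simp
  have n: "real n \<ge> 1" using Suc(1) by simp
  show ?case
  proof (cases "1 + 2 * ?a / real n \<ge> 0")
    case True
    have "V (Suc n) = (1 + 2 * ?a / real n) * V n + 1" by (rule V_rec[OF Suc(1)])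
    also have "\<dots> \<le> (1 + 2 * ?a / real n) * (K * real n) + 1"
      using True Suc(2) by (intro add_mono mult_left_mono) auto
    also have "(1 + 2 * ?a / real n) * (K * real n) = K * real n + 2 * ?a * K"
    proof -
      have "(2 * ?a / real n) * (K * real n) = 2 * ?a * K" using n by simp
      then show ?thesis by (simp add: distrib_right)
    qed
    also have "K * real n + 2 * ?a * K + 1 \<le> K * real (Suc n)"
      using K2 by (simp add: algebra_simps)
    finally show ?thesis .
  next
    case False
    have "V (Suc n) = (1 + 2 * ?a / real n) * V n + 1" by (rule V_rec[OF Suc(1)])
    also have "\<dots> \<le> 1" using False V_nonneg[of n] by (simp add: mult_nonpos_nonneg)
    also have "1 \<le> 1 * real (Suc n)" by simp
    also have "\<dots> \<le> K * real (Suc n)" using K1 by (intro mult_right_mono) auto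
    finally show ?thesis .
  qed
qed

lemma erw_pos_restr: "erw_pos X n \<omega> = (\<Sum>k=1..n. restrict (\<lambda>k. X k \<omega>) {1..n} k)"
  unfolding erw_pos_def by (rule sum.cong) auto

definition B :: "nat \<Rightarrow> real \<Rightarrow> 'a set" where
  "B n e = {\<omega>\<in>space M. restrict (\<lambda>k. X k \<omega>) {1..n} \<in> {h\<in>Pi\<^sub>E {1..n} (\<lambda>_. D). e * real n \<le> norm (\<Sum>k=1..n. h k)}}"

lemma B_sets[measurable]: "B n e \<in> sets M"
  unfolding B_def by (rule restr_sets) auto

lemma B_mem: "\<omega> \<in> space M \<Longrightarrow> (\<forall>k\<in>{1..n}. X k \<omega> \<in> D) \<Longrightarrow> e * real n \<le> norm (erw_pos X n \<omega>) \<Longrightarrow> \<omega> \<in> B n e"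
  unfolding B_def erw_pos_restr by auto

lemma B_prob:
  assumes e: "e > 0" and n: "n \<ge> 1"
  shows "prob (B n e) \<le> V n / (e * real n)\<^sup>2"
proof -
  let ?A = "{h\<in>Pi\<^sub>E {1..n} (\<lambda>_. D). e * real n \<le> norm (\<Sum>k=1..n. h k)}"
  have en: "e * real n > 0" using e n by simp
  have "prob (B n e) = (\<Sum>h\<in>?A. Pn n h)" unfolding B_def by (rule restr_sum) auto
  also have "\<dots> \<le> (\<Sum>h\<in>?A. ((norm (\<Sum>k=1..n. h k))\<^sup>2 / (e * real n)\<^sup>2) * Pn n h)"
  proof (rule sum_mono)
    fix h assume h: "h \<in> ?A"
    then have "(e * real n)\<^sup>2 \<le> (norm (\<Sum>k=1..n. h k))\<^sup>2"
      using en by (intro power_mono) auto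
    moreover have "(e * real n)\<^sup>2 > 0" by (rule zero_less_power[OF en])
    ultimately have "1 \<le> (norm (\<Sum>k=1..n. h k))\<^sup>2 / (e * real n)\<^sup>2"
      using le_divide_eq_1_pos by blast
    then show "Pn n h \<le> ((norm (\<Sum>k=1..n. h k))\<^sup>2 / (e * real n)\<^sup>2) * Pn n h"
      using Pn_nonneg[of n h] mult_right_mono[of 1 "(norm (\<Sum>k=1..n. h k))\<^sup>2 / (e * real n)\<^sup>2" "Pn n h"] by simp
  qed
  also have "\<dots> \<le> (\<Sum>h\<in>Pi\<^sub>E {1..n} (\<lambda>_. D). ((norm (\<Sum>k=1..n. h k))\<^sup>2 / (e * real n)\<^sup>2) * Pn n h)"
    by (rule sum_mono2) (auto simp: finite_PiE Dfin Pn_nonneg)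
  also have "\<dots> = V n / (e * real n)\<^sup>2"
    unfolding V_def by (simp add: sum_divide_distrib)
  finally show ?thesis .
qed

lemma allD: "AE \<omega> in M. \<forall>k\<ge>1. X k \<omega> \<in> D"
proof -
  have "AE \<omega> in M. \<forall>n::nat. \<omega> \<in> {\<omega>\<in>space M. restrict (\<lambda>k. X k \<omega>) {1..n} \<in> Pi\<^sub>E {1..n} (\<lambda>_. D)}"
  proof (subst AE_all_countable, intro allI AE_prob_1)
    fix n :: nat
    show "prob {\<omega>\<in>space M. restrict (\<lambda>k. X k \<omega>) {1..n} \<in> Pi\<^sub>E {1..n} (\<lambda>_. D)} = 1"
    proof (cases "n \<ge> 1")
      case True then show ?thesis using restr_sum[of "Pi\<^sub>E {1..n} (\<lambda>_. D)" n] Psum1[OF True] by simp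
    next
      case False then have "n = 0" by simp
      then have "{\<omega>\<in>space M. restrict (\<lambda>k. X k \<omega>) {1..n} \<in> Pi\<^sub>E {1..n} (\<lambda>_. D)} = space M"
        by (auto simp: restrict_def fun_eq_iff)
      then show ?thesis by (simp add: prob_space)
    qed
  qed
  then show ?thesis
  proof (rule AE_mp, intro AE_I2 impI allI)
    fix \<omega> and k :: nat assume "\<forall>n. \<omega> \<in> {\<omega> \<in> space M. restrict (\<lambda>k. X k \<omega>) {1..n} \<in> Pi\<^sub>E {1..n} (\<lambda>_. D)}" "1 \<le> k"
    then have "restrict (\<lambda>k. X k \<omega>) {1..k} \<in> Pi\<^sub>E {1..k} (\<lambda>_. D)" by blast
    then show "X k \<omega> \<in> D" using \<open>1 \<le> k\<close> by (auto simp: PiE_iff)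
  qed
qed

end


lemma det:
  fixes x :: "nat \<Rightarrow> real^'d"
  assumes x1: "\<And>k. k \<ge> 1 \<Longrightarrow> norm (x k) \<le> 1"
    and ev: "\<And>j::nat. eventually (\<lambda>m. norm (\<Sum>k=1..(Suc m)^2. x k) < real ((Suc m)^2) / (real j + 1)) sequentially"
  shows "(\<lambda>n. (1 / real n) *\<^sub>R ((1 / real n) *\<^sub>R (\<Sum>k=1..n. \<Sum>i=1..k. x i))) \<longlonglongrightarrow> 0"
proof -
  define f where "f n = norm (\<Sum>k=1..n. x k)" for n
  have lip: "f (b + t) \<le> f b + real t" for b t
  proof (induction t)
    case 0 show ?case by simp
  next
    case (Suc t)
    have "(\<Sum>k=1..b + Suc t. x k) = (\<Sum>k=1..b+t. x k) + x (Suc (b+t))" by simp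
    then have "f (b + Suc t) \<le> f (b+t) + norm (x (Suc (b+t)))" unfolding f_def by (simp add: norm_triangle_ineq)
    also have "\<dots> \<le> f (b+t) + 1" using x1[of "Suc (b+t)"] by simp
    finally show ?case using Suc.IH by simp
  qed
  have fle: "f n \<le> real n" for n using lip[of 0 n] by (simp add: f_def)
  have step1: "\<exists>C\<ge>0. \<forall>n. f n \<le> 2 * real n / (real j + 1) + C" for j :: nat
  proof -
    define e where "e = 1 / (real j + 1)"
    have e: "e > 0" by (simp add: e_def)
    obtain M where M: "\<And>m. m \<ge> M \<Longrightarrow> f ((Suc m)^2) < real ((Suc m)^2) / (real j + 1)"
      using ev[of j] unfolding eventually_sequentially f_def by blast
    define C where "C = real j + 1 + real ((M+1)^2)"
    have "f n \<le> 2 * real n / (real j + 1) + C" for n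
    proof -
      define m where "m = floor_sqrt n"
      have m1: "m^2 \<le> n" and m2: "n < (Suc m)^2" unfolding m_def by (simp_all add: Suc_floor_sqrt_power2_gt)
      show ?thesis
      proof (cases "m \<ge> Suc M")
        case True
        then obtain m' where m': "m = Suc m'" "m' \<ge> M" by (cases m) auto
        have fm: "f (m^2) < e * real m ^ 2" using M[OF m'(2)] m'(1) by (simp add: e_def of_nat_power)
        have "f n \<le> f (m^2) + real (n - m^2)" using lip[of "m^2" "n - m^2"] m1 by simp
        moreover have "n - m^2 \<le> 2 * m" using m2 by (simp add: power2_eq_square)
        then have "real (n - m^2) \<le> 2 * real m" by linarith
        moreover have "2 * real m \<le> e * real m ^ 2 + 1 / e"
        proof -
          have "0 \<le> (e * real m - 1)^2" by simp
          then have "0 \<le> e * (e * real m ^ 2 + 1 / e - 2 * real m)"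
            using e by (simp add: power2_eq_square algebra_simps)
          then show ?thesis using e by (simp add: zero_le_mult_iff)
        qed
        moreover have "e * real m ^ 2 \<le> e * real n" using m1 e
          by (intro mult_left_mono) (auto simp flip: of_nat_power)
        moreover have "1 / e = real j + 1" by (simp add: e_def)
        moreover have "2 * e * real n = 2 * real n / (real j + 1)" by (simp add: e_def)
        moreover have "0 \<le> real ((M+1)^2)" by simp
        ultimately show ?thesis using fm C_def by linarith
      next
        case False
        then have "Suc m \<le> Suc M" by simp
        then have "(Suc m)^2 \<le> (M+1)^2" by (simp add: power_mono)
        then have "f n \<le> real ((M+1)^2)" using fle[of n] m2 by linarith
        moreover have "0 \<le> 2 * real n / (real j + 1)" by simp
        ultimately show ?thesis unfolding C_def by linarith
      qed
    qed
    moreover have "C \<ge> 0" by (simp add: C_def)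
    ultimately show ?thesis by blast
  qed
  show ?thesis unfolding LIMSEQ_iff
  proof (intro allI impI)
    fix r :: real assume r: "r > 0"
    obtain j :: nat where j: "4 / r < real j" using reals_Archimedean2 by blast
    have jr: "2 / (real j + 1) < r / 2"
    proof -
      have "4 < real j * r" using j r by (simp add: field_simps)
      then have "4 < (real j + 1) * r" using r by (simp add: algebra_simps)
      then show ?thesis using r by (simp add: field_simps)
    qed
    obtain C where C0: "C \<ge> 0" and C: "\<And>n. f n \<le> 2 * real n / (real j + 1) + C" using step1[of j] by blast
    obtain N0 :: nat where N0: "2 * C / r < real N0" using reals_Archimedean2 by blast
    show "\<exists>no. \<forall>n\<ge>no. norm ((1 / real n) *\<^sub>R ((1 / real n) *\<^sub>R (\<Sum>k=1..n. \<Sum>i=1..k. x i)) - 0) < r"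
    proof (intro exI allI impI)
      fix n assume n: "n \<ge> Suc N0"
      then have n1: "real n \<ge> 1" and nN: "real n > real N0" by auto
      have Cn: "C / real n < r / 2"
      proof -
        have "2 * C < r * real N0" using N0 r by (simp add: field_simps)
        also have "\<dots> \<le> r * real n" using nN r by simp
        finally show ?thesis using n1 by (simp add: field_simps)
      qed
      have "norm (\<Sum>k=1..n. \<Sum>i=1..k. x i) \<le> (\<Sum>k=1..n. f k)"
        unfolding f_def by (rule norm_sum)
      also have "\<dots> \<le> (\<Sum>k=1..n. 2 * real n / (real j + 1) + C)"
      proof (rule sum_mono)
        fix k assume "k \<in> {1..n}"
        then have "2 * real k / (real j + 1) \<le> 2 * real n / (real j + 1)"
          by (intro divide_right_mono) auto
        then show "f k \<le> 2 * real n / (real j + 1) + C" using C[of k] by linarith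
      qed
      also have "\<dots> = real n * (2 * real n / (real j + 1) + C)" by simp
      finally have bnd: "norm (\<Sum>k=1..n. \<Sum>i=1..k. x i) \<le> real n * (2 * real n / (real j + 1) + C)" .
      have "norm ((1 / real n) *\<^sub>R ((1 / real n) *\<^sub>R (\<Sum>k=1..n. \<Sum>i=1..k. x i)) - 0)
          = norm (\<Sum>k=1..n. \<Sum>i=1..k. x i) / (real n * real n)" using n1 by simp
      also have "\<dots> \<le> real n * (2 * real n / (real j + 1) + C) / (real n * real n)"
        using bnd n1 by (intro divide_right_mono) auto
      also have "\<dots> = (2 * real n / (real j + 1) + C) / real n" using n1 by simp
      also have "\<dots> = 2 / (real j + 1) + C / real n" using n1 by (simp add: add_divide_distrib)
      also have "\<dots> < r" using jr Cn by linarith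
      finally show "norm ((1 / real n) *\<^sub>R ((1 / real n) *\<^sub>R (\<Sum>k=1..n. \<Sum>i=1..k. x i)) - 0) < r" .
    qed
  qed
qed



context erw_loc begin

lemma ev_sq:
  assumes pd: "p < (2 * real CARD('d) + 1) / (4 * real CARD('d))"
  shows "AE \<omega> in M. \<forall>j::nat. eventually (\<lambda>m. norm (erw_pos X ((Suc m)^2) \<omega>) < real ((Suc m)^2) / (real j + 1)) sequentially"
proof (subst AE_all_countable, intro allI)
  fix j :: nat
  define e where "e = 1 / (real j + 1)"
  have e: "e > 0" by (simp add: e_def)
  have ab: "p - rr p CARD('d) < 1/2" by (rule a_bound[OF pd])
  define K where "K = max 1 (1 / (1 - 2 * (p - rr p CARD('d))))"
  have VK: "n \<ge> 1 \<Longrightarrow> V n \<le> K * real n" for n unfolding K_def by (rule V_bound[OF ab])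
  define A where "A m = B ((Suc m)^2) e" for m
  have Ab: "prob (A m) \<le> K / e\<^sup>2 * inverse (real (Suc m) ^ 2)" for m
  proof -
    define n where "n = (Suc m)^2"
    have n1: "n \<ge> 1" by (simp add: n_def)
    have "prob (A m) \<le> V n / (e * real n)\<^sup>2" unfolding A_def n_def[symmetric] by (rule B_prob[OF e n1])
    also have "\<dots> \<le> K * real n / (e * real n)\<^sup>2" by (intro divide_right_mono VK n1) simp
    also have "\<dots> = K / e\<^sup>2 * inverse (real n)" using n1 e by (simp add: field_simps power2_eq_square)
    also have "real n = real (Suc m) ^ 2" by (simp add: n_def)
    finally show ?thesis .
  qed
  have summ: "summable (\<lambda>m. K / e\<^sup>2 * inverse (real (Suc m) ^ 2))"
  proof -
    have "summable (\<lambda>m. inverse (real m ^ 2))" by (rule inverse_power_summable) simp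
    then have "summable (\<lambda>m. inverse (real (Suc m) ^ 2))" by (subst summable_Suc_iff)
    then show ?thesis by (rule summable_mult)
  qed
  have "summable (\<lambda>m. measure M (A m))"
    by (rule summable_comparison_test[OF _ summ]) (use Ab in \<open>auto simp del: of_nat_Suc\<close>)
  then have BC: "AE \<omega> in M. eventually (\<lambda>m. \<omega> \<in> space M - A m) sequentially"
    by (intro borel_cantelli_AE1) (auto simp: A_def emeasure_finite less_top[symmetric])
  show "AE \<omega> in M. eventually (\<lambda>m. norm (erw_pos X ((Suc m)^2) \<omega>) < real ((Suc m)^2) / (real j + 1)) sequentially"
    using BC allD
  proof eventually_elim
    case (elim \<omega>)
    show ?case using elim(1)
    proof eventually_elim
      case (elim m)
      then have w: "\<omega> \<in> space M" and nB: "\<omega> \<notin> B ((Suc m)^2) e" by (auto simp: A_def)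
      have "\<forall>k\<in>{1..(Suc m)^2}. X k \<omega> \<in> D" using \<open>\<forall>k\<ge>1. X k \<omega> \<in> D\<close> by auto
      then have "\<not> e * real ((Suc m)^2) \<le> norm (erw_pos X ((Suc m)^2) \<omega>)"
        using B_mem[OF w] nB by blast
      then show ?case by (simp add: e_def)
    qed
  qed
qed

end

theorem theorem2p1:
  fixes M :: "'a measure" and p :: real and X :: "nat \<Rightarrow> 'a \<Rightarrow> real ^ 'd"
  assumes "0 \<le> p" and "p \<le> 1"
    and "p < (2 * real CARD('d) + 1) / (4 * real CARD('d))"
    and "is_erw M p X"
  shows "AE \<omega> in M. (\<lambda>n. (1 / real n) *\<^sub>R erw_center X n \<omega>) \<longlonglongrightarrow> 0"
proof -
  have ps: "prob_space M" using assms(4) unfolding is_erw_def by blast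
  interpret erw_loc M p X
    by (rule erw_loc.intro[OF ps]) (unfold_locales, fact+)
  show ?thesis using allD ev_sq[OF assms(3)]
  proof eventually_elim
    case (elim \<omega>)
    have "(\<lambda>n. (1 / real n) *\<^sub>R ((1 / real n) *\<^sub>R (\<Sum>k=1..n. \<Sum>i=1..k. X i \<omega>))) \<longlonglongrightarrow> 0"
    proof (rule det)
      show "norm (X k \<omega>) \<le> 1" if "k \<ge> 1" for k using elim(1) that dirs_norm by fastforce
      show "eventually (\<lambda>m. norm (\<Sum>k=1..(Suc m)^2. X k \<omega>) < real ((Suc m)^2) / (real j + 1)) sequentially" for j :: nat
        using elim(2) unfolding erw_pos_def by blast
    qed
    then show ?case unfolding erw_center_def erw_pos_def .
  qed
qed

end
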